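(* Let $\mu_0\cdots\mu_4\neq0$ and suppose $\mu_0+\mu_1+\mu_2-\mu_3-\mu_4\neq0$ and $\mu_0+\mu_3+\mu_4-\mu_1-\mu_2\neq0$. Put $$\alpha=\frac{2\mu_1\mu_2}{\mu_0+\mu_1+\mu_2-\mu_3-\mu_4},\qquad \beta=\frac{2\mu_3\mu_4}{\mu_0+\mu_3+\mu_4-\mu_1-\mu_2},$$ and let $R$ be the quadric in $\mathbb{P}^3$ defined by $$(\mu_1X_2+\mu_2X_1)(\mu_3X_4+\mu_4X_3)+\alpha(\mu_0X_3X_4+\mu_3X_0X_4+\mu_4X_0X_3)+\beta(\mu_0X_1X_2+\mu_1X_0X_2+\mu_2X_0X_1)+\alpha\beta X_0^2 .$$ Then $R$ is always singular (rank $\le 3$ as a quadric on $\mathbb{P}^3$), with singular point $[\mu_1+\mu_2-\mu_3-\mu_4:-\mu_1:-\mu_2:\mu_3:\mu_4]$. Moreover $R$ has rank $\le2$ (i.e. is a union of two planes) if and only if $$\sum_{i=0}^4\mu_i^3-\sum_{i\neq j}\mu_i^2\mu_j+2\sum_{i<j<k}\mu_i\mu_j\mu_k=0.$$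
   Context: $\mathbb{P}^3$ is the hyperplane $\sum_{i=0}^4X_i=0$ in $\mathbb{P}^4$ with homogeneous coordinates $[X_0:\dots:X_4]$, over $\mathbb{C}$. The middle sum runs over ordered pairs of distinct indices, the last over 3-element subsets. *)

theory Defs
  imports "HOL-Analysis.Analysis" "HOL-Library.Numeral_Type"
begin

text \<open>Homogeneous coordinates X_0..X_4 of P^4 are the components x$0..x$4 of a
vector x :: complex^5.  P^3 is the hyperplane sum X_i = 0.\<close>

definition hyperplaneP3 :: "(complex^5) set" where
  "hyperplaneP3 = {x. (\<Sum>i\<in>UNIV. x $ i) = 0}"

definition polar :: "((complex^5) \<Rightarrow> complex) \<Rightarrow> complex^5 \<Rightarrow> complex^5 \<Rightarrow> complex" where
  "polar Q x y = Q (x + y) - Q x - Q y"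

definition radical_on_P3 :: "((complex^5) \<Rightarrow> complex) \<Rightarrow> (complex^5) set" where
  "radical_on_P3 Q = {x \<in> hyperplaneP3. \<forall>y\<in>hyperplaneP3. polar Q x y = 0}"

definition rank_on_P3 :: "((complex^5) \<Rightarrow> complex) \<Rightarrow> nat" where
  "rank_on_P3 Q = vec.dim hyperplaneP3 - vec.dim (radical_on_P3 Q)"

definition alphaR :: "(nat \<Rightarrow> complex) \<Rightarrow> complex" where
  "alphaR \<mu> = 2 * \<mu> 1 * \<mu> 2 / (\<mu> 0 + \<mu> 1 + \<mu> 2 - \<mu> 3 - \<mu> 4)"

definition betaR :: "(nat \<Rightarrow> complex) \<Rightarrow> complex" where
  "betaR \<mu> = 2 * \<mu> 3 * \<mu> 4 / (\<mu> 0 + \<mu> 3 + \<mu> 4 - \<mu> 1 - \<mu> 2)"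

definition quadR :: "(nat \<Rightarrow> complex) \<Rightarrow> complex^5 \<Rightarrow> complex" where
  "quadR \<mu> X =
     (\<mu> 1 * X$2 + \<mu> 2 * X$1) * (\<mu> 3 * X$4 + \<mu> 4 * X$3)
   + alphaR \<mu> * (\<mu> 0 * X$3 * X$4 + \<mu> 3 * X$0 * X$4 + \<mu> 4 * X$0 * X$3)
   + betaR \<mu> * (\<mu> 0 * X$1 * X$2 + \<mu> 1 * X$0 * X$2 + \<mu> 2 * X$0 * X$1)
   + alphaR \<mu> * betaR \<mu> * (X$0)^2"

definition sing_pointR :: "(nat \<Rightarrow> complex) \<Rightarrow> complex^5" where
  "sing_pointR \<mu> = (\<chi> i::5. if i = 0 then \<mu> 1 + \<mu> 2 - \<mu> 3 - \<mu> 4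
      else if i = 1 then - \<mu> 1 else if i = 2 then - \<mu> 2 else if i = 3 then \<mu> 3 else \<mu> 4)"

end

theory Submission
  imports Defs
begin

lemma exhaust_5: fixes x :: 5 shows "x = 0 \<or> x = 1 \<or> x = 2 \<or> x = 3 \<or> x = 4"
proof (induct x)
  case (of_int z)
  then have "z = 0 \<or> z = 1 \<or> z = 2 \<or> z = 3 \<or> z = 4" by fastforce
  then show ?case by auto
qed

lemma UNIV_5: "(UNIV::5 set) = {0,1,2,3,4}" using exhaust_5 by auto

lemma sum_5: "sum f (UNIV::5 set) = f 0 + f 1 + f 2 + f 3 + f 4"
  unfolding UNIV_5 by (simp add: ac_simps)

definition G :: "(nat \<Rightarrow> complex) \<Rightarrow> nat \<Rightarrow> complex^5 \<Rightarrow> complex" where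
 "G \<mu> i x = (
   if i = 0 then alphaR \<mu> * (\<mu> 3 * x$4 + \<mu> 4 * x$3) + betaR \<mu> * (\<mu> 1 * x$2 + \<mu> 2 * x$1) + 2*alphaR \<mu>*betaR \<mu>*x$0
   else if i = 1 then \<mu> 2 * (\<mu> 3 * x$4 + \<mu> 4 * x$3) + betaR \<mu> * (\<mu> 0 * x$2 + \<mu> 2 * x$0)
   else if i = 2 then \<mu> 1 * (\<mu> 3 * x$4 + \<mu> 4 * x$3) + betaR \<mu> * (\<mu> 0 * x$1 + \<mu> 1 * x$0)
   else if i = 3 then \<mu> 4 * (\<mu> 1 * x$2 + \<mu> 2 * x$1) + alphaR \<mu> * (\<mu> 0 * x$4 + \<mu> 4 * x$0)
   else \<mu> 3 * (\<mu> 1 * x$2 + \<mu> 2 * x$1) + alphaR \<mu> * (\<mu> 0 * x$3 + \<mu> 3 * x$0))"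

lemma polar_eq: "polar (quadR \<mu>) x y =
   y$0 * G \<mu> 0 x + y$1 * G \<mu> 1 x + y$2 * G \<mu> 2 x + y$3 * G \<mu> 3 x + y$4 * G \<mu> 4 x"
  unfolding polar_def quadR_def G_def
  by (simp add: algebra_simps power2_eq_square)

lemma axis_comp: "axis (i::5) (1::complex) $ j = (if j = i then 1 else 0)"
  by (simp add: axis_def)

lemma distinct5: "(0::5) \<noteq> 1" "(0::5) \<noteq> 2" "(0::5) \<noteq> 3" "(0::5) \<noteq> 4"
  "(1::5) \<noteq> 2" "(1::5) \<noteq> 3" "(1::5) \<noteq> 4" "(2::5) \<noteq> 3" "(2::5) \<noteq> 4" "(3::5) \<noteq> 4"
  by simp_all

lemma H_iff: "x \<in> hyperplaneP3 \<longleftrightarrow> x$0+x$1+x$2+x$3+x$4 = 0"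
  by (simp add: hyperplaneP3_def sum_5)

definition E :: "(nat \<Rightarrow> complex) \<Rightarrow> nat \<Rightarrow> complex^5 \<Rightarrow> complex" where
 "E \<mu> j x = G \<mu> j x - G \<mu> 0 x"

lemma rad_char: "x \<in> radical_on_P3 (quadR \<mu>) \<longleftrightarrow>
   (x$0+x$1+x$2+x$3+x$4 = 0 \<and> E \<mu> 1 x = 0 \<and> E \<mu> 2 x = 0 \<and> E \<mu> 3 x = 0 \<and> E \<mu> 4 x = 0)"
proof
  assume x: "x \<in> radical_on_P3 (quadR \<mu>)"
  then have h: "x \<in> hyperplaneP3" and p: "\<And>y. y \<in> hyperplaneP3 \<Longrightarrow> polar (quadR \<mu>) x y = 0"
    by (auto simp: radical_on_P3_def)
  have w: "polar (quadR \<mu>) x (axis j 1 - axis 0 1) = E \<mu> (if j = 1 then 1 else if j = 2 then 2 else if j = 3 then 3 else 4) x"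
    if "j \<noteq> (0::5)" for j
    using that exhaust_5[of j] by (auto simp: polar_eq axis_comp E_def)
  have hw: "axis j 1 - axis 0 1 \<in> hyperplaneP3" for j :: 5
    using exhaust_5[of j] by (auto simp: H_iff axis_comp)
  show "x$0+x$1+x$2+x$3+x$4 = 0 \<and> E \<mu> 1 x = 0 \<and> E \<mu> 2 x = 0 \<and> E \<mu> 3 x = 0 \<and> E \<mu> 4 x = 0"
    using h p[OF hw[of 1]] p[OF hw[of 2]] p[OF hw[of 3]] p[OF hw[of 4]]
      w[of 1] w[of 2] w[of 3] w[of 4] by (simp add: H_iff)
next
  assume c: "x$0+x$1+x$2+x$3+x$4 = 0 \<and> E \<mu> 1 x = 0 \<and> E \<mu> 2 x = 0 \<and> E \<mu> 3 x = 0 \<and> E \<mu> 4 x = 0"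
  have "polar (quadR \<mu>) x y = 0" if "y \<in> hyperplaneP3" for y
  proof -
    have y0: "y$0 = - (y$1+y$2+y$3+y$4)" using that by (simp add: H_iff add_eq_0_iff2 algebra_simps)
    have "polar (quadR \<mu>) x y = y$1 * E \<mu> 1 x + y$2 * E \<mu> 2 x + y$3 * E \<mu> 3 x + y$4 * E \<mu> 4 x"
      unfolding polar_eq y0 E_def by (simp add: algebra_simps)
    then show ?thesis using c by simp
  qed
  then show "x \<in> radical_on_P3 (quadR \<mu>)" using c by (simp add: radical_on_P3_def H_iff)
qed

lemma subspace_H: "vec.subspace hyperplaneP3"
  unfolding vec.subspace_def hyperplaneP3_def
  by (simp add: sum.distrib sum_distrib_left[symmetric])

lemma dim_H: "vec.dim hyperplaneP3 = 4"
proof -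
  let ?e = "axis (0::5) (1::complex)"
  have sp: "vec.span hyperplaneP3 = hyperplaneP3" using subspace_H by simp
  have ne: "?e \<notin> vec.span hyperplaneP3" unfolding sp by (simp add: H_iff axis_comp)
  have "UNIV \<subseteq> vec.span (insert ?e hyperplaneP3)"
  proof
    fix z :: "complex^5"
    let ?s = "z$0+z$1+z$2+z$3+z$4"
    have "z - ?s *s ?e \<in> vec.span hyperplaneP3" unfolding sp by (simp add: H_iff axis_comp)
    then show "z \<in> vec.span (insert ?e hyperplaneP3)" unfolding vec.span_insert by blast
  qed
  then have "vec.span (insert ?e hyperplaneP3) = UNIV" by auto
  then have "vec.dim (insert ?e hyperplaneP3) = 5"
  proof -
    have "vec.dim (UNIV::(complex^5) set) = 5" by (subst vec_dim_card) simp
    then show ?thesis by (metis vec.dim_span \<open>vec.span (insert ?e hyperplaneP3) = UNIV\<close>)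
  qed
  then show ?thesis using ne by (simp add: vec.dim_insert)
qed


lemma ab_rel:
  assumes s: "\<mu> 0 + \<mu> 1 + \<mu> 2 - \<mu> 3 - \<mu> 4 \<noteq> 0"
    and t: "\<mu> 0 + \<mu> 3 + \<mu> 4 - \<mu> 1 - \<mu> 2 \<noteq> 0"
  shows "alphaR \<mu> * (\<mu> 0 + \<mu> 1 + \<mu> 2 - \<mu> 3 - \<mu> 4) = 2 * \<mu> 1 * \<mu> 2"
    "betaR \<mu> * (\<mu> 0 + \<mu> 3 + \<mu> 4 - \<mu> 1 - \<mu> 2) = 2 * \<mu> 3 * \<mu> 4"
  using s t by (simp_all add: alphaR_def betaR_def)

lemma p_comps: "sing_pointR \<mu> $ 0 = \<mu> 1 + \<mu> 2 - \<mu> 3 - \<mu> 4"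
  "sing_pointR \<mu> $ 1 = - \<mu> 1" "sing_pointR \<mu> $ 2 = - \<mu> 2"
  "sing_pointR \<mu> $ 3 = \<mu> 3" "sing_pointR \<mu> $ 4 = \<mu> 4"
  by (simp_all add: sing_pointR_def)

lemma G_p:
  assumes s: "\<mu> 0 + \<mu> 1 + \<mu> 2 - \<mu> 3 - \<mu> 4 \<noteq> 0"
    and t: "\<mu> 0 + \<mu> 3 + \<mu> 4 - \<mu> 1 - \<mu> 2 \<noteq> 0"
  shows "G \<mu> j (sing_pointR \<mu>) = 0"
proof -
  let ?a = "alphaR \<mu>" and ?b = "betaR \<mu>"
  note r = ab_rel[OF s t]
  have "G \<mu> 0 (sing_pointR \<mu>) = ?a * (2 * \<mu> 3 * \<mu> 4) - ?b * (2 * \<mu> 1 * \<mu> 2)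
       + 2 * ?a * ?b * (\<mu> 1 + \<mu> 2 - \<mu> 3 - \<mu> 4)"
    by (simp add: G_def p_comps algebra_simps)
  also have "\<dots> = ?a * (?b * (\<mu> 0 + \<mu> 3 + \<mu> 4 - \<mu> 1 - \<mu> 2)) - ?b * (?a * (\<mu> 0 + \<mu> 1 + \<mu> 2 - \<mu> 3 - \<mu> 4))
       + 2 * ?a * ?b * (\<mu> 1 + \<mu> 2 - \<mu> 3 - \<mu> 4)" using r by simp
  also have "\<dots> = 0" by (simp add: algebra_simps)
  finally have g0: "G \<mu> 0 (sing_pointR \<mu>) = 0" .
  have g1: "G \<mu> 1 (sing_pointR \<mu>) = \<mu> 2 * (2 * \<mu> 3 * \<mu> 4 - ?b * (\<mu> 0 + \<mu> 3 + \<mu> 4 - \<mu> 1 - \<mu> 2))"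
    by (simp add: G_def p_comps algebra_simps)
  have g2: "G \<mu> 2 (sing_pointR \<mu>) = \<mu> 1 * (2 * \<mu> 3 * \<mu> 4 - ?b * (\<mu> 0 + \<mu> 3 + \<mu> 4 - \<mu> 1 - \<mu> 2))"
    by (simp add: G_def p_comps algebra_simps)
  have g3: "G \<mu> 3 (sing_pointR \<mu>) = \<mu> 4 * (?a * (\<mu> 0 + \<mu> 1 + \<mu> 2 - \<mu> 3 - \<mu> 4) - 2 * \<mu> 1 * \<mu> 2)"
    by (simp add: G_def p_comps algebra_simps)
  have g4: "G \<mu> 4 (sing_pointR \<mu>) = \<mu> 3 * (?a * (\<mu> 0 + \<mu> 1 + \<mu> 2 - \<mu> 3 - \<mu> 4) - 2 * \<mu> 1 * \<mu> 2)"
    by (simp add: G_def p_comps algebra_simps)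
  have g5: "j > 4 \<Longrightarrow> G \<mu> j (sing_pointR \<mu>) = G \<mu> 4 (sing_pointR \<mu>)"
    by (simp add: G_def)
  show ?thesis using g0 g1 g2 g3 g4 g5 r
    by (cases "j = 0 \<or> j = 1 \<or> j = 2 \<or> j = 3 \<or> j = 4") auto
qed

lemma p_rad:
  assumes s: "\<mu> 0 + \<mu> 1 + \<mu> 2 - \<mu> 3 - \<mu> 4 \<noteq> 0"
    and t: "\<mu> 0 + \<mu> 3 + \<mu> 4 - \<mu> 1 - \<mu> 2 \<noteq> 0"
  shows "sing_pointR \<mu> \<in> radical_on_P3 (quadR \<mu>)"
  unfolding rad_char E_def G_p[OF s t] by (simp add: p_comps)

definition qv :: "complex^3 \<Rightarrow> complex^5" where
  "qv v = (\<chi> i::5. if i = 0 then -(v$1+v$2+v$3) else if i = 1 then v$1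
     else if i = 2 then v$2 else if i = 3 then v$3 else 0)"

lemma qv_comps: "qv v $ 0 = -(v$1+v$2+v$3)" "qv v $ 1 = v$1" "qv v $ 2 = v$2"
  "qv v $ 3 = v$3" "qv v $ 4 = 0"
  by (simp_all add: qv_def)

definition idx :: "3 \<Rightarrow> nat" where
  "idx j = (if j = 1 then 1 else if j = 2 then 2 else 3)"

definition NM :: "(nat \<Rightarrow> complex) \<Rightarrow> complex^3^3" where
  "NM \<mu> = (\<chi> j k. E \<mu> (idx j) (qv (axis k 1)))"

lemma NM_mult: "(NM \<mu> *v v) $ j = E \<mu> (idx j) (qv v)"
  using exhaust_3[of j]
  by (auto simp: matrix_vector_mult_def sum_3 NM_def idx_def E_def G_def qv_comps axis_def
      algebra_simps)

definition FF :: "(nat \<Rightarrow> complex) \<Rightarrow> complex" where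
  "FF \<mu> = (let a = alphaR \<mu>; b = betaR \<mu> in
     \<mu> 1 * \<mu> 2 * (\<mu> 4 - b)^2 - a * \<mu> 4^2 * (\<mu> 1 + \<mu> 2) + a * b * \<mu> 4 * (\<mu> 0 + \<mu> 1 + \<mu> 2)
     - a * b^2 * \<mu> 0 + a^2 * \<mu> 4^2)"

lemma det_NM: "det (NM \<mu>) = 2 * \<mu> 0 * betaR \<mu> * FF \<mu>"
  by (simp add: det_3 NM_def idx_def E_def G_def qv_comps axis_def FF_def Let_def
      algebra_simps power2_eq_square)

lemma sum04: "(\<Sum>i\<in>{0..4::nat}. f i) = f 0 + f 1 + f 2 + f 3 + f 4"
proof -
  have u: "{0..4::nat} = {0,1,2,3,4}" by auto
  show ?thesis unfolding u by (simp add: ac_simps)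
qed

lemma sumgt: "(\<Sum>j\<in>{0<..4::nat}. f j) = f 1 + f 2 + f 3 + f 4"
  "(\<Sum>j\<in>{1<..4::nat}. f j) = f 2 + f 3 + f 4"
  "(\<Sum>j\<in>{2<..4::nat}. f j) = f 3 + f 4"
  "(\<Sum>j\<in>{3<..4::nat}. f j) = f 4"
  "(\<Sum>j\<in>{4<..4::nat}. f j) = 0"
proof -
  have g: "{0<..4::nat} = {1,2,3,4}" "{1<..4::nat} = {2,3,4}" "{2<..4::nat} = {3,4}"
     "{3<..4::nat} = {4}" "{4<..4::nat} = {}" by auto
  show "(\<Sum>j\<in>{0<..4::nat}. f j) = f 1 + f 2 + f 3 + f 4"
    "(\<Sum>j\<in>{1<..4::nat}. f j) = f 2 + f 3 + f 4"
    "(\<Sum>j\<in>{2<..4::nat}. f j) = f 3 + f 4"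
    "(\<Sum>j\<in>{3<..4::nat}. f j) = f 4"
    "(\<Sum>j\<in>{4<..4::nat}. f j) = 0" unfolding g by (simp_all add: ac_simps)
qed

lemma sumdiff: "i \<in> {0..4::nat} \<Longrightarrow> (\<Sum>j\<in>{0..4::nat} - {i}. f j :: complex) = (\<Sum>j\<in>{0..4}. f j) - f i"
  by (simp add: sum_diff1)

lemma cub_explicit:
  fixes \<mu> :: "nat \<Rightarrow> complex"
  shows "(\<Sum>i\<in>{0..4}. \<mu> i ^ 3)
          - (\<Sum>i\<in>{0..4}. \<Sum>j\<in>{0..4} - {i}. \<mu> i ^ 2 * \<mu> j)
          + 2 * (\<Sum>i\<in>{0..4}. \<Sum>j\<in>{i<..4}. \<Sum>k\<in>{j<..4}. \<mu> i * \<mu> j * \<mu> k)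
     = (\<Sum>i\<in>{0..4}. \<mu> i ^ 3)
          - (\<Sum>i\<in>{0..4}. \<mu> i ^ 2 * ((\<Sum>j\<in>{0..4}. \<mu> j) - \<mu> i))
          + 2 * (\<Sum>i\<in>{0..4}. \<Sum>j\<in>{i<..4}. \<Sum>k\<in>{j<..4}. \<mu> i * \<mu> j * \<mu> k)"
  by (simp add: sumdiff sum_distrib_left right_diff_distrib)

lemma cub_eq:
  fixes \<mu> :: "nat \<Rightarrow> complex"
  defines "s \<equiv> \<mu> 0 + \<mu> 1 + \<mu> 2 - \<mu> 3 - \<mu> 4" and "t \<equiv> \<mu> 0 + \<mu> 3 + \<mu> 4 - \<mu> 1 - \<mu> 2"
  shows "t * ((\<Sum>i\<in>{0..4}. \<mu> i ^ 3)
          - (\<Sum>i\<in>{0..4}. \<Sum>j\<in>{0..4} - {i}. \<mu> i ^ 2 * \<mu> j)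
          + 2 * (\<Sum>i\<in>{0..4}. \<Sum>j\<in>{i<..4}. \<Sum>k\<in>{j<..4}. \<mu> i * \<mu> j * \<mu> k))
     = s^2 * (t - 2 * \<mu> 3)^2 - 2 * s * t^2 * (\<mu> 1 + \<mu> 2) + 4 * \<mu> 3 * s * t * (\<mu> 0 + \<mu> 1 + \<mu> 2)
       - 8 * \<mu> 3^2 * s * \<mu> 0 + 4 * \<mu> 1 * \<mu> 2 * t^2"
  unfolding cub_explicit s_def t_def
  unfolding sum04 sumgt
  by (simp add: algebra_simps power2_eq_square power3_eq_cube)

lemma FF_eq:
  fixes \<mu> :: "nat \<Rightarrow> complex"
  defines "s \<equiv> \<mu> 0 + \<mu> 1 + \<mu> 2 - \<mu> 3 - \<mu> 4" and "t \<equiv> \<mu> 0 + \<mu> 3 + \<mu> 4 - \<mu> 1 - \<mu> 2"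
  assumes "s \<noteq> 0" "t \<noteq> 0"
  shows "FF \<mu> * s^2 * t^2 = \<mu> 1 * \<mu> 2 * \<mu> 4^2 * (s^2 * (t - 2 * \<mu> 3)^2 - 2 * s * t^2 * (\<mu> 1 + \<mu> 2) + 4 * \<mu> 3 * s * t * (\<mu> 0 + \<mu> 1 + \<mu> 2)
       - 8 * \<mu> 3^2 * s * \<mu> 0 + 4 * \<mu> 1 * \<mu> 2 * t^2)"
proof -
  let ?a = "alphaR \<mu>" and ?b = "betaR \<mu>"
  have ra: "?a * s = 2 * \<mu> 1 * \<mu> 2" and rb: "?b * t = 2 * \<mu> 3 * \<mu> 4"
    using ab_rel[of \<mu>] assms by (simp_all add: s_def t_def)
  have "FF \<mu> * s^2 * t^2 = \<mu> 1 * \<mu> 2 * s^2 * (\<mu> 4 * t - ?b * t)^2 - (?a * s) * s * t^2 * \<mu> 4^2 * (\<mu> 1 + \<mu> 2)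
     + (?a * s) * (?b * t) * s * t * \<mu> 4 * (\<mu> 0 + \<mu> 1 + \<mu> 2) - (?a * s) * (?b * t)^2 * s * \<mu> 0
     + (?a * s)^2 * \<mu> 4^2 * t^2"
    by (simp add: FF_def Let_def algebra_simps power2_eq_square)
  also have "\<dots> = \<mu> 1 * \<mu> 2 * s^2 * (\<mu> 4 * t - 2 * \<mu> 3 * \<mu> 4)^2 - (2 * \<mu> 1 * \<mu> 2) * s * t^2 * \<mu> 4^2 * (\<mu> 1 + \<mu> 2)
     + (2 * \<mu> 1 * \<mu> 2) * (2 * \<mu> 3 * \<mu> 4) * s * t * \<mu> 4 * (\<mu> 0 + \<mu> 1 + \<mu> 2) - (2 * \<mu> 1 * \<mu> 2) * (2 * \<mu> 3 * \<mu> 4)^2 * s * \<mu> 0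
     + (2 * \<mu> 1 * \<mu> 2)^2 * \<mu> 4^2 * t^2"
    unfolding ra rb ..
  also have "\<dots> = \<mu> 1 * \<mu> 2 * \<mu> 4^2 * (s^2 * (t - 2 * \<mu> 3)^2 - 2 * s * t^2 * (\<mu> 1 + \<mu> 2) + 4 * \<mu> 3 * s * t * (\<mu> 0 + \<mu> 1 + \<mu> 2)
       - 8 * \<mu> 3^2 * s * \<mu> 0 + 4 * \<mu> 1 * \<mu> 2 * t^2)"
    by (simp add: algebra_simps power2_eq_square)
  finally show ?thesis .
qed

lemma det_iff:
  fixes \<mu> :: "nat \<Rightarrow> complex"
  assumes m: "\<mu> 0 * \<mu> 1 * \<mu> 2 * \<mu> 3 * \<mu> 4 \<noteq> 0"
    and s: "\<mu> 0 + \<mu> 1 + \<mu> 2 - \<mu> 3 - \<mu> 4 \<noteq> 0"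
    and t: "\<mu> 0 + \<mu> 3 + \<mu> 4 - \<mu> 1 - \<mu> 2 \<noteq> 0"
  shows "det (NM \<mu>) = 0 \<longleftrightarrow>
            (\<Sum>i\<in>{0..4}. \<mu> i ^ 3)
          - (\<Sum>i\<in>{0..4}. \<Sum>j\<in>{0..4} - {i}. \<mu> i ^ 2 * \<mu> j)
          + 2 * (\<Sum>i\<in>{0..4}. \<Sum>j\<in>{i<..4}. \<Sum>k\<in>{j<..4}. \<mu> i * \<mu> j * \<mu> k) = 0"
proof -
  have b: "betaR \<mu> \<noteq> 0" using ab_rel(2)[OF s t] m by auto
  have "det (NM \<mu>) = 0 \<longleftrightarrow> FF \<mu> = 0" using b m by (simp add: det_NM)
  also have "\<dots> \<longleftrightarrow> FF \<mu> * (\<mu> 0 + \<mu> 1 + \<mu> 2 - \<mu> 3 - \<mu> 4)^2 * (\<mu> 0 + \<mu> 3 + \<mu> 4 - \<mu> 1 - \<mu> 2)^2 = 0"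
    using s t by simp
  also have "\<dots> \<longleftrightarrow> (\<mu> 0 + \<mu> 3 + \<mu> 4 - \<mu> 1 - \<mu> 2) * ((\<Sum>i\<in>{0..4}. \<mu> i ^ 3)
          - (\<Sum>i\<in>{0..4}. \<Sum>j\<in>{0..4} - {i}. \<mu> i ^ 2 * \<mu> j)
          + 2 * (\<Sum>i\<in>{0..4}. \<Sum>j\<in>{i<..4}. \<Sum>k\<in>{j<..4}. \<mu> i * \<mu> j * \<mu> k)) = 0"
    unfolding FF_eq[OF s t] cub_eq using m by simp
  also have "\<dots> \<longleftrightarrow> (\<Sum>i\<in>{0..4}. \<mu> i ^ 3)
          - (\<Sum>i\<in>{0..4}. \<Sum>j\<in>{0..4} - {i}. \<mu> i ^ 2 * \<mu> j)
          + 2 * (\<Sum>i\<in>{0..4}. \<Sum>j\<in>{i<..4}. \<Sum>k\<in>{j<..4}. \<mu> i * \<mu> j * \<mu> k) = 0"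
    using t by simp
  finally show ?thesis .
qed

lemma E_lin: "E \<mu> j (c *s x - d *s z) = c * E \<mu> j x - d * E \<mu> j z"
  by (simp add: E_def G_def algebra_simps)

theorem proposition8:
  fixes \<mu> :: "nat \<Rightarrow> complex"
  assumes "\<mu> 0 * \<mu> 1 * \<mu> 2 * \<mu> 3 * \<mu> 4 \<noteq> 0"
    and "\<mu> 0 + \<mu> 1 + \<mu> 2 - \<mu> 3 - \<mu> 4 \<noteq> 0"
    and "\<mu> 0 + \<mu> 3 + \<mu> 4 - \<mu> 1 - \<mu> 2 \<noteq> 0"
  shows "rank_on_P3 (quadR \<mu>) \<le> 3
       \<and> sing_pointR \<mu> \<noteq> 0
       \<and> sing_pointR \<mu> \<in> radical_on_P3 (quadR \<mu>)
       \<and> (rank_on_P3 (quadR \<mu>) \<le> 2 \<longleftrightarrow>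
            (\<Sum>i\<in>{0..4}. \<mu> i ^ 3)
          - (\<Sum>i\<in>{0..4}. \<Sum>j\<in>{0..4} - {i}. \<mu> i ^ 2 * \<mu> j)
          + 2 * (\<Sum>i\<in>{0..4}. \<Sum>j\<in>{i<..4}. \<Sum>k\<in>{j<..4}. \<mu> i * \<mu> j * \<mu> k) = 0)"
proof -
  note m = assms(1) and s = assms(2) and t = assms(3)
  define p where "p = sing_pointR \<mu>"
  define R where "R = radical_on_P3 (quadR \<mu>)"
  have pR: "p \<in> R" unfolding p_def R_def using p_rad[OF s t] .
  have p4: "p $ 4 = \<mu> 4" unfolding p_def by (simp add: p_comps)
  have m4: "\<mu> 4 \<noteq> 0" using m by auto
  have p0: "p \<noteq> 0" using p4 m4 by auto
  have rank: "rank_on_P3 (quadR \<mu>) = 4 - vec.dim R"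
    unfolding rank_on_P3_def R_def dim_H ..
  have ind1: "vec.independent {p}" using p0 by (simp add: vec.independent_insert)
  have d1: "1 \<le> vec.dim R"
    using vec.independent_card_le_dim[OF _ ind1, of R] pR by simp
  have iff: "2 \<le> vec.dim R \<longleftrightarrow> det (NM \<mu>) = 0"
  proof
    assume d2: "2 \<le> vec.dim R"
    show "det (NM \<mu>) = 0"
    proof (rule ccontr)
      assume dn: "det (NM \<mu>) \<noteq> 0"
      then have inv: "invertible (NM \<mu>)" by (simp add: invertible_det_nz)
      then have ker: "\<And>v. NM \<mu> *v v = 0 \<Longrightarrow> v = 0"
        using matrix_left_invertible_ker invertible_left_inverse by blast
      have "R \<subseteq> vec.span {p}"
      proof
        fix x assume xR: "x \<in> R"
        define y where "y = \<mu> 4 *s x - x$4 *s p"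
        have y4: "y $ 4 = 0" unfolding y_def using p4 by simp
        have yE: "E \<mu> j y = 0" if "j \<in> {1,2,3,4}" for j
          using that xR pR unfolding y_def E_lin R_def rad_char by auto
        have ys: "y$0+y$1+y$2+y$3+y$4 = 0"
        proof -
          have "y$0+y$1+y$2+y$3+y$4 = \<mu> 4 * (x$0+x$1+x$2+x$3+x$4) - x$4 * (p$0+p$1+p$2+p$3+p$4)"
            unfolding y_def by (simp add: algebra_simps)
          then show ?thesis using xR pR unfolding R_def rad_char by simp
        qed
        have y0': "y$0 + (y$1+y$2+y$3) = 0" using ys y4 by (simp add: add.assoc)
        have y0: "y$0 = -(y$1+y$2+y$3)" using y0' by (rule eq_neg_iff_add_eq_0[THEN iffD2])
        define v :: "complex^3" where "v = (\<chi> i. if i = 1 then y$1 else if i = 2 then y$2 else y$3)"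
        have v: "v$1 = y$1" "v$2 = y$2" "v$3 = y$3" by (simp_all add: v_def)
        have qy: "qv v = y"
        proof -
          have "qv v $ i = y $ i" for i
            using exhaust_5[of i] y4 y0 v by (auto simp: qv_comps)
          then show ?thesis by (simp add: vec_eq_iff)
        qed
        have "NM \<mu> *v v = 0"
        proof -
          have "(NM \<mu> *v v) $ j = 0" for j
            using exhaust_3[of j] yE unfolding NM_mult qy by (auto simp: idx_def)
          then show ?thesis by (simp add: vec_eq_iff)
        qed
        then have "v = 0" by (rule ker)
        moreover have "qv 0 = 0" by (simp add: qv_def vec_eq_iff)
        ultimately have "y = 0" using qy by simp
        then have "x = (x$4 / \<mu> 4) *s p" unfolding y_def using m4
          by (simp add: vec_eq_iff field_simps)
        then show "x \<in> vec.span {p}" by (metis vec.span_base vec.span_scale singletonI)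
      qed
      then have "vec.dim R \<le> vec.dim (vec.span {p})" by (rule vec.dim_subset)
      also have "\<dots> \<le> 1" using vec.dim_le_card[of "{p}" "{p}"] by (simp add: vec.span_base)
      finally show False using d2 by simp
    qed
  next
    assume dz: "det (NM \<mu>) = 0"
    then have "\<not> invertible (NM \<mu>)" by (simp add: invertible_det_nz)
    then obtain v where nv: "NM \<mu> *v v = 0" and v0: "v \<noteq> 0"
      using matrix_left_invertible_ker invertible_left_inverse by blast
    define q where "q = qv v"
    have q4: "q $ 4 = 0" unfolding q_def by (simp add: qv_comps)
    have q0: "q \<noteq> 0"
    proof
      assume "q = 0"
      then have "v$1 = 0" "v$2 = 0" "v$3 = 0" unfolding q_def
        by (metis qv_comps(2) zero_index, metis qv_comps(3) zero_index, metis qv_comps(4) zero_index)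
      then have "v = 0" by (simp add: vec_eq_iff forall_3)
      then show False using v0 by simp
    qed
    have Ej: "E \<mu> j q = 0" if "j \<in> {1,2,3}" for j
    proof -
      have "(NM \<mu> *v v) $ (if j = 1 then 1 else if j = 2 then 2 else 3) = 0" using nv by simp
      then show ?thesis using that unfolding NM_mult q_def by (auto simp: idx_def)
    qed
    have qs: "q$0+q$1+q$2+q$3+q$4 = 0" unfolding q_def by (simp add: qv_comps)
    have "polar (quadR \<mu>) q p = 0"
    proof -
      have "polar (quadR \<mu>) q p = polar (quadR \<mu>) p q" unfolding polar_def by (simp add: add.commute)
      also have "\<dots> = 0" unfolding polar_eq p_def G_p[OF s t] by simp
      finally show ?thesis .
    qed
    then have "p$0 * G \<mu> 0 q + p$1 * (E \<mu> 1 q + G \<mu> 0 q) + p$2 * (E \<mu> 2 q + G \<mu> 0 q)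
       + p$3 * (E \<mu> 3 q + G \<mu> 0 q) + p$4 * (E \<mu> 4 q + G \<mu> 0 q) = 0"
      unfolding polar_eq E_def by simp
    then have "\<mu> 4 * E \<mu> 4 q = 0" using Ej[of 1] Ej[of 2] Ej[of 3]
      unfolding p_def by (simp add: p_comps algebra_simps)
    then have E4: "E \<mu> 4 q = 0" using m4 by simp
    have qR: "q \<in> R" unfolding R_def rad_char using qs Ej E4 by simp
    have pq: "p \<notin> vec.span {q}"
    proof
      assume "p \<in> vec.span {q}"
      then obtain k where "p = k *s q" by (auto simp: vec.span_singleton)
      then have "p $ 4 = k * q $ 4" by simp
      then show False using p4 q4 m4 by simp
    qed
    have ind2: "vec.independent {p, q}"
      using pq q0 by (simp add: vec.independent_insert)
    have "p \<noteq> q" using p4 q4 m4 by auto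
    then have "card {p, q} = 2" by simp
    moreover have "card {p, q} \<le> vec.dim R"
      using vec.independent_card_le_dim[OF _ ind2, of R] pR qR by simp
    ultimately show "2 \<le> vec.dim R" by simp
  qed
  show ?thesis
    unfolding p_def[symmetric] R_def[symmetric] rank
    using pR p0 d1 iff det_iff[OF m s t] by auto
qed

end
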